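(* Let $\Gamma\in\mathbb{R}^{p\times p}$ be a connected continuous-time interconnection, $r\in\mathbb{R}^p$ with $r^T\Gamma=0$, $r^T\mathbf 1=1$, and $\Omega$ symmetric positive definite with $(\Gamma-\mathbf 1r^T)^T\Omega+\Omega(\Gamma-\mathbf 1r^T)=-I_p$. Define $V(\mathbf x):=\mathbf x^T(\Omega\otimes I_n)\mathbf x$ on $\mathbb{R}^{np}$. Then for every Riemann-integrable $Q:\mathbb{R}_{\ge0}\to\mathcal Q_n$ and all $t\ge0$, the solution of $\dot{\mathbf x}=(\Gamma\otimes Q_t)\mathbf x$ satisfies $$\frac{d}{dt}V(\mathbf x(t)-\bar{\mathbf x})=-(\mathbf x(t)-\bar{\mathbf x})^T(I_p\otimes Q_t)(\mathbf x(t)-\bar{\mathbf x}),$$ where $\bar{\mathbf x}:=(\mathbf 1r^T\otimes I_n)\mathbf x(0)$.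
   Context: $\mathbf 1$ all-ones vector; $\otimes$ Kronecker product; $\mathcal Q_n$ symmetric positive semidefinite $n\times n$ matrices. Continuous-time interconnection: $\gamma_{ij}\ge0$ ($i\ne j$), $\gamma_{ii}=-\sum_{j\ne i}\gamma_{ij}$; graph edge $(n_i,n_j)$ iff $\gamma_{ij}>0$; connected if some node is reachable by a directed path from every other node. *)

theory Defs
  imports "HOL-Analysis.Analysis"
begin

text \<open>Kronecker product of square matrices; the stacked space R^{np} is indexed by
  pairs (i,k) with i the block (agent) index and k the index within a block.\<close>
definition kron :: "real^'p^'p \<Rightarrow> real^'n^'n \<Rightarrow> real^('p \<times> 'n)^('p \<times> 'n)" where
  "kron A B = (\<chi> ik. \<chi> jl. A$(fst ik)$(fst jl) * B$(snd ik)$(snd jl))"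

definition ones_outer :: "real^'p \<Rightarrow> real^'p^'p" where
  "ones_outer r = (\<chi> i j. r$j)"

definition ones :: "real^'p" where
  "ones = (\<chi> i. 1)"

definition ct_interconnection :: "real^'p^'p \<Rightarrow> bool" where
  "ct_interconnection G \<longleftrightarrow>
     (\<forall>i j. i \<noteq> j \<longrightarrow> G$i$j \<ge> 0) \<and>
     (\<forall>i. G$i$i = - (\<Sum>j\<in>UNIV - {i}. G$i$j))"

definition graph_edges :: "real^'p^'p \<Rightarrow> ('p \<times> 'p) set" where
  "graph_edges G = {(i,j). G$i$j > 0}"

definition connected_interconnection :: "real^'p^'p \<Rightarrow> bool" where
  "connected_interconnection G \<longleftrightarrow> ct_interconnection G \<and>
     (\<exists>k. \<forall>i. (i,k) \<in> (graph_edges G)\<^sup>*)"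

definition sym_psd :: "real^'n^'n \<Rightarrow> bool" where
  "sym_psd A \<longleftrightarrow> transpose A = A \<and> (\<forall>v. 0 \<le> v \<bullet> (A *v v))"

definition sym_pd :: "real^'n^'n \<Rightarrow> bool" where
  "sym_pd A \<longleftrightarrow> transpose A = A \<and> (\<forall>v. v \<noteq> 0 \<longrightarrow> 0 < v \<bullet> (A *v v))"

text \<open>Riemann integrability on [a,b] (constant-gauge Riemann sums over tagged divisions).\<close>
definition riemann_integrable_on :: "(real \<Rightarrow> 'a::real_normed_vector) \<Rightarrow> real \<Rightarrow> real \<Rightarrow> bool" where
  "riemann_integrable_on f a b \<longleftrightarrow>
     (\<exists>I. \<forall>e>0. \<exists>d>0. \<forall>D. D tagged_division_of {a..b} \<and> (\<lambda>x. ball x d) fine D \<longrightarrow>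
        norm ((\<Sum>(x,K)\<in>D. Henstock_Kurzweil_Integration.content K *\<^sub>R f x) - I) < e)"

definition locally_riemann_integrable :: "(real \<Rightarrow> 'a::real_normed_vector) \<Rightarrow> bool" where
  "locally_riemann_integrable f \<longleftrightarrow> (\<forall>T\<ge>0. riemann_integrable_on f 0 T)"

end

theory Submission
  imports Defs
begin

lemma kron_mult: "kron A B ** kron C D = kron (A ** C) (B ** D)"
  unfolding kron_def matrix_matrix_mult_def
  by (simp add: vec_eq_iff UNIV_Times_UNIV[symmetric] sum.cartesian_product
      sum_product split_def mult_ac del: UNIV_Times_UNIV)

lemma kron_transpose: "transpose (kron A B) = kron (transpose A) (transpose B)"
  unfolding kron_def transpose_def by (simp add: vec_eq_iff)

lemma kron_add_left: "kron (A + C) B = kron A B + kron C B"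
  unfolding kron_def by (simp add: vec_eq_iff algebra_simps)

lemma kron_diff_left: "kron (A - C) B = kron A B - kron C B"
  unfolding kron_def by (simp add: vec_eq_iff algebra_simps)

lemma kron_uminus_left: "kron (- A) B = - kron A B"
  unfolding kron_def by (simp add: vec_eq_iff)

lemma kron_zero_left: "kron 0 B = 0"
  unfolding kron_def by (simp add: vec_eq_iff)

lemma inner_mult_split: "(z::real^'m) \<bullet> ((A ** B) *v z) = (transpose A *v z) \<bullet> (B *v z)"
  by (simp add: dot_lmul_matrix matrix_vector_mul_assoc[symmetric])

lemma matrix_diff_ldistrib: "(A::real^'b^'a) ** (B - C) = A ** B - A ** C"
  by (simp add: vec_eq_iff matrix_matrix_mult_def sum_subtractf algebra_simps)

lemma matrix_diff_rdistrib: "((B::real^'b^'a) - C) ** A = B ** A - C ** A"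
  by (simp add: vec_eq_iff matrix_matrix_mult_def sum_subtractf algebra_simps)

lemma matrix_add_rdistrib': "((B::real^'b^'a) + C) ** A = B ** A + C ** A"
  by (simp add: vec_eq_iff matrix_matrix_mult_def sum.distrib algebra_simps)

lemma transpose_diff': "transpose ((A::real^'b^'a) - B) = transpose A - transpose B"
  by (simp add: vec_eq_iff transpose_def)

theorem lemma2:
  fixes G \<Omega> :: "real^'p^'p" and r :: "real^'p"
    and Q :: "real \<Rightarrow> real^'n^'n" and x :: "real \<Rightarrow> real^('p \<times> 'n)"
  assumes conn: "connected_interconnection G"
    and r_left: "r v* G = 0"
    and r_norm: "r \<bullet> ones = 1"
    and Omega_pd: "sym_pd \<Omega>"
    and lyap: "transpose (G - ones_outer r) ** \<Omega> + \<Omega> ** (G - ones_outer r) = - mat 1"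
    and Q_int: "locally_riemann_integrable Q"
    and Q_psd: "\<forall>t\<ge>0. sym_psd (Q t)"
    and sol: "\<forall>t\<ge>0. (x has_vector_derivative (kron G (Q t) *v x t)) (at t within {0..})"
  shows "\<forall>t\<ge>0.
    let V = (\<lambda>y. y \<bullet> (kron \<Omega> (mat 1) *v y));
        xbar = kron (ones_outer r) (mat 1) *v x 0
    in ((\<lambda>s. V (x s - xbar)) has_real_derivative
          (- ((x t - xbar) \<bullet> (kron (mat 1) (Q t) *v (x t - xbar))))) (at t within {0..})"
proof (intro allI impI)
  fix t :: real assume t0: "t \<ge> 0"
  define Or where "Or = ones_outer r"
  define I :: "real^'n^'n" where "I = mat 1"
  define K where "K = kron \<Omega> I"
  define P where "P = kron Or I"
  define xbar where "xbar = P *v x 0"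
  define z where "z = (\<lambda>s. x s - xbar)"
  have rowsum: "(\<Sum>k\<in>UNIV. G$i$k) = 0" for i
  proof -
    have "(\<Sum>k\<in>UNIV. G$i$k) = G$i$i + (\<Sum>k\<in>UNIV - {i}. G$i$k)"
      by (simp add: sum.remove)
    then show ?thesis using conn unfolding connected_interconnection_def ct_interconnection_def
      by simp
  qed
  have GOr: "G ** Or = 0"
    by (simp add: vec_eq_iff matrix_matrix_mult_def Or_def ones_outer_def
        sum_distrib_right[symmetric] rowsum)
  have OrG: "Or ** G = 0"
  proof -
    have "(\<Sum>k\<in>UNIV. r$k * G$k$j) = 0" for j
      using r_left by (simp add: vec_eq_iff vector_matrix_mult_def)
    then show ?thesis
      by (simp add: vec_eq_iff matrix_matrix_mult_def Or_def ones_outer_def)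
  qed
  have OrOr: "Or ** Or = Or"
  proof -
    have "(\<Sum>k\<in>UNIV. r$k) = 1" using r_norm by (simp add: inner_vec_def ones_def)
    then show ?thesis
      by (simp add: vec_eq_iff matrix_matrix_mult_def Or_def ones_outer_def
        sum_distrib_right[symmetric])
  qed
  have Osym: "transpose \<Omega> = \<Omega>" using Omega_pd by (simp add: sym_pd_def)
  have Qsym: "transpose (Q t) = Q t" using Q_psd t0 by (simp add: sym_psd_def)
  have Mxbar: "kron G (Q t) *v xbar = 0"
    by (simp add: xbar_def P_def matrix_vector_mul_assoc kron_mult GOr kron_zero_left)
  have cons: "P *v x s = P *v x 0" if "s \<ge> 0" for s
  proof -
    have d: "((\<lambda>s. P *v x s) has_vector_derivative 0) (at s within {0..})" if "s \<in> {0..}" for s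
    proof -
      have "(x has_vector_derivative (kron G (Q s) *v x s)) (at s within {0..})"
        using sol that by simp
      then have "((\<lambda>s. P *v x s) has_vector_derivative P *v (kron G (Q s) *v x s)) (at s within {0..})"
        by (rule bounded_linear.has_vector_derivative[OF matrix_vector_mul_bounded_linear])
      moreover have "P *v (kron G (Q s) *v x s) = 0"
        unfolding matrix_vector_mul_assoc P_def kron_mult OrG kron_zero_left by simp
      ultimately show ?thesis by simp
    qed
    then obtain c where c: "\<And>s. s \<in> {0..} \<Longrightarrow> P *v x s = c"
      using has_vector_derivative_zero_constant[of "{0..}" "\<lambda>s. P *v x s", OF _ d] by auto
    show ?thesis using c[of s] c[of 0] that by simp
  qed
  have Pz: "P *v z t = 0"
    using cons[OF t0]
    by (simp add: z_def xbar_def matrix_vector_mult_diff_distrib matrix_vector_mul_assoc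
        P_def kron_mult OrOr I_def)
  have dz: "(z has_vector_derivative (kron G (Q t) *v z t)) (at t within {0..})"
  proof -
    have "(z has_vector_derivative (kron G (Q t) *v x t - 0)) (at t within {0..})"
      unfolding z_def using sol t0 by (intro has_vector_derivative_diff) auto
    then show ?thesis using Mxbar by (simp add: z_def matrix_vector_mult_diff_distrib)
  qed
  define M where "M = kron G (Q t)"
  have dV: "((\<lambda>s. z s \<bullet> (K *v z s)) has_vector_derivative
      (z t \<bullet> (K *v (M *v z t)) + (M *v z t) \<bullet> (K *v z t))) (at t within {0..})"
    using bounded_bilinear.has_vector_derivative[OF bounded_bilinear_inner dz
        bounded_linear.has_vector_derivative[OF matrix_vector_mul_bounded_linear dz]]
    unfolding M_def by simp
  have lyap': "\<Omega> ** G + transpose G ** \<Omega> = - mat 1 + transpose Or ** \<Omega> + \<Omega> ** Or"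
  proof -
    have e: "transpose G ** \<Omega> - transpose Or ** \<Omega> + (\<Omega> ** G - \<Omega> ** Or) = - mat 1"
      using lyap unfolding Or_def[symmetric]
      by (simp add: transpose_diff' matrix_diff_rdistrib matrix_diff_ldistrib)
    show ?thesis unfolding e[symmetric] by (simp add: algebra_simps)
  qed
  have sum_eq: "z t \<bullet> (K *v (M *v z t)) + (M *v z t) \<bullet> (K *v z t)
      = z t \<bullet> (kron (\<Omega> ** G + transpose G ** \<Omega>) (Q t) *v z t)"
  proof -
    have "(M *v z t) \<bullet> (K *v z t) = z t \<bullet> ((transpose M ** K) *v z t)"
      by (metis dot_lmul_matrix matrix_vector_mul_assoc vector_transpose_matrix)
    moreover have "transpose M ** K = kron (transpose G ** \<Omega>) (Q t)"
      by (simp add: M_def K_def kron_transpose kron_mult Qsym I_def)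
    moreover have "K ** M = kron (\<Omega> ** G) (Q t)"
      by (simp add: M_def K_def kron_mult I_def)
    ultimately show ?thesis
      by (simp add: matrix_vector_mul_assoc kron_add_left matrix_vector_mult_add_rdistrib
          inner_add_right)
  qed
  have t1: "z t \<bullet> (kron (\<Omega> ** Or) (Q t) *v z t) = 0"
  proof -
    have "kron (\<Omega> ** Or) (Q t) = kron \<Omega> (Q t) ** P" by (simp add: P_def kron_mult I_def)
    then show ?thesis by (simp add: matrix_vector_mul_assoc[symmetric] Pz)
  qed
  have t2: "z t \<bullet> (kron (transpose Or ** \<Omega>) (Q t) *v z t) = 0"
  proof -
    have "kron (transpose Or ** \<Omega>) (Q t) = transpose P ** kron \<Omega> (Q t)"
      by (simp add: P_def kron_mult kron_transpose I_def)
    then show ?thesis using inner_mult_split[of "z t" "transpose P"] Pz by simp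
  qed
  have final: "z t \<bullet> (K *v (M *v z t)) + (M *v z t) \<bullet> (K *v z t)
      = - (z t \<bullet> (kron (mat 1) (Q t) *v z t))"
    unfolding sum_eq lyap'
    by (simp add: kron_add_left kron_uminus_left matrix_vector_mult_add_rdistrib inner_add_right
        t1 t2 kron_diff_left matrix_vector_mult_diff_rdistrib inner_diff_right)
  show "let V = (\<lambda>y. y \<bullet> (kron \<Omega> (mat 1) *v y));
        xbar = kron (ones_outer r) (mat 1) *v x 0
    in ((\<lambda>s. V (x s - xbar)) has_real_derivative
          (- ((x t - xbar) \<bullet> (kron (mat 1) (Q t) *v (x t - xbar))))) (at t within {0..})"
    using dV unfolding final
    by (simp add: Let_def has_real_derivative_iff_has_vector_derivative z_def xbar_def P_def
        K_def Or_def I_def)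
qed

end
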